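(* Let $P$ be a positive opetope of dimension $n$ with top face $x_n=\mathbf{m}_P$. For every maximal flag $\vec{x}$ of $P$ that is not the $\lhd$-largest one, $\mathrm{succ}(\vec{x})$ is the immediate successor of $\vec{x}$ with respect to the flag order $\lhd$ on the set of maximal flags of $P$.
   Context: A positive hypergraph $S$ consists of finite sets $S_k$ ($k\in\mathbb{N}$), only finitely many nonempty, functions $\gamma:S_{k+1}\to S_k$, and for each $k$ an assignment $\delta$ sending each $a\in S_{k+1}$ to a nonempty subset $\delta(a)\subseteq S_k$, with $\delta(a)$ a singleton for $a\in S_1$. A face is identified with its singleton; $\gamma(X)=\{\gamma(a):a\in X\}$, $\delta(X)=\bigcup_{a\in X}\delta(a)$. For $k>0$ the lower order $<^-$ on $S_k$ is the transitive closure of: $a\lhd b$ iff $\gamma(a)\in\delta(b)$. The upper order $<^+$ on $S_k$ is the transitive closure of: $a\lhd b$ iff there is $\alpha\in S_{k+1}$ with $a\in\delta(\alpha)$, $\gamma(\alpha)=b$; $a\perp^{\pm}b$ iff $a<^{\pm}b$ or $b<^{\pm}a$. A positive opetopic cardinal: $S_0\ne\emptyset$; globularity ($\gamma\gamma(a)=\gamma\delta(a)-\delta\delta(a)$, $\delta\gamma(a)=\delta\delta(a)-\gamma\delta(a)$ for $\dim a\ge2$); each $<^+$ a strict order, linear on $S_0$; for $k>0$, $\perp^-\cap\perp^+=\emptyset$ on $S_k$; for $x\in S_{k-1}$, $\{a:\gamma(a)=x\}$ and $\{a:x\in\delta(a)\}$ linearly ordered by $<^+$. A positive opetope: additionally $|P_m-\delta(P_{m+1})|\le1$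 for all $m$; if $\dim P=n$ then $P_n=\{\mathbf m_P\}$. Write $\partial(a)=\{\gamma(a)\}\cup\delta(a)$. A maximal flag is a sequence $\vec{x}=[x_n,\dots,x_0]$ with $x_n=\mathbf m_P$, $x_i\in P_i$ and $x_i\in\partial(x_{i+1})$ for $i<n$. The sign of a sequence $[x_k,\dots,x_l]$ of this kind is $1$ if $k=l$, equals $\mathrm{sgn}([x_{k-1},\dots,x_l])$ if $x_{k-1}=\gamma(x_k)$, and equals $-\mathrm{sgn}([x_{k-1},\dots,x_l])$ if $x_{k-1}\in\delta(x_k)$; $\mathrm{sgn}(\vec x)=\mathrm{sgn}([x_n,\dots,x_0])$. For $x\in P_k$, on the pencil $\{a\in P_{k+1}: x\in\partial(a)\}$ define $a\prec_x b$ iff (i) $\gamma(b)=x\in\delta(a)$, or (ii) $x\in\delta(a)\cap\delta(b)$ and $a<^+b$, or (iii) $\gamma(a)=x=\gamma(b)$ and $b<^+a$. For distinct maximal flags $\vec x,\vec y$ with $k=\min\{j:x_j\ne y_j\}$, put $\vec x\lhd\vec y$ iff $k=0$ and $y_0<^+x_0$; or $k>0$, $\mathrm{sgn}([x_{k-1},\dots,x_0])=1$ and $x_k\prec_{x_{k-1}}y_k$; or $k>0$, $\mathrm{sgn}([x_{k-1},\dots,x_0])=-1$ and $y_k\prec_{x_{k-1}}x_k$. (This is a strict linear order on maximal flags.) For a maximal flag $\vec x$ that is neither $\lhd$-first nor $\lhd$-last, its low level is $\mathrm{ll}(\vec x)=\max\{i<n-1: x_{i+1}\in\delta(x_{i+2})\}$.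 A maximal flag $\vec y$ is the $k$-th neighbour of $\vec x$ if $\vec y\ne\vec x$ and $y_i=x_i$ for all $i\ne k$. The high neighbour of $\vec x$ is its $(n-1)$-th neighbour, the low neighbour its $\mathrm{ll}(\vec x)$-th neighbour. For a non-terminal maximal flag, $\mathrm{succ}(\vec x)$ is the high neighbour of $\vec x$ if $\mathrm{sgn}(\vec x)=1$ and the low neighbour of $\vec x$ if $\mathrm{sgn}(\vec x)=-1$. *)

theory Defs
  imports Main
begin

text \<open>A positive hypergraph is given by the graded family of face sets
  S k, the target function gam and the source assignment del.
  Faces of different dimensions are distinct (S k pairwise disjoint).\<close>

definition bd :: "('a \<Rightarrow> 'a) \<Rightarrow> ('a \<Rightarrow> 'a set) \<Rightarrow> 'a \<Rightarrow> 'a set" where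
  "bd gam del a = insert (gam a) (del a)"

definition positive_hypergraph ::
  "(nat \<Rightarrow> 'a set) \<Rightarrow> ('a \<Rightarrow> 'a) \<Rightarrow> ('a \<Rightarrow> 'a set) \<Rightarrow> bool" where
  "positive_hypergraph S gam del \<longleftrightarrow>
     (\<forall>k. finite (S k)) \<and>
     (\<forall>k l. k \<noteq> l \<longrightarrow> S k \<inter> S l = {}) \<and>
     (\<exists>N. \<forall>k>N. S k = {}) \<and>
     (\<forall>k. \<forall>a\<in>S (Suc k). gam a \<in> S k) \<and>
     (\<forall>k. \<forall>a\<in>S (Suc k). del a \<subseteq> S k \<and> del a \<noteq> {}) \<and>
     (\<forall>a\<in>S 1. \<exists>b. del a = {b})"

definition lower_rel ::
  "(nat \<Rightarrow> 'a set) \<Rightarrow> ('a \<Rightarrow> 'a) \<Rightarrow> ('a \<Rightarrow> 'a set) \<Rightarrow> nat \<Rightarrow> 'a rel" where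
  "lower_rel S gam del k = {(a, b). a \<in> S k \<and> b \<in> S k \<and> gam a \<in> del b}"

definition lower_lt ::
  "(nat \<Rightarrow> 'a set) \<Rightarrow> ('a \<Rightarrow> 'a) \<Rightarrow> ('a \<Rightarrow> 'a set) \<Rightarrow> nat \<Rightarrow> 'a \<Rightarrow> 'a \<Rightarrow> bool" where
  "lower_lt S gam del k a b \<longleftrightarrow> (a, b) \<in> (lower_rel S gam del k)\<^sup>+"

definition upper_rel ::
  "(nat \<Rightarrow> 'a set) \<Rightarrow> ('a \<Rightarrow> 'a) \<Rightarrow> ('a \<Rightarrow> 'a set) \<Rightarrow> nat \<Rightarrow> 'a rel" where
  "upper_rel S gam del k =
     {(a, b). a \<in> S k \<and> b \<in> S k \<and> (\<exists>\<alpha>\<in>S (Suc k). a \<in> del \<alpha> \<and> gam \<alpha> = b)}"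

definition upper_lt ::
  "(nat \<Rightarrow> 'a set) \<Rightarrow> ('a \<Rightarrow> 'a) \<Rightarrow> ('a \<Rightarrow> 'a set) \<Rightarrow> nat \<Rightarrow> 'a \<Rightarrow> 'a \<Rightarrow> bool" where
  "upper_lt S gam del k a b \<longleftrightarrow> (a, b) \<in> (upper_rel S gam del k)\<^sup>+"

definition positive_opetopic_cardinal ::
  "(nat \<Rightarrow> 'a set) \<Rightarrow> ('a \<Rightarrow> 'a) \<Rightarrow> ('a \<Rightarrow> 'a set) \<Rightarrow> bool" where
  "positive_opetopic_cardinal S gam del \<longleftrightarrow>
     positive_hypergraph S gam del \<and>
     S 0 \<noteq> {} \<and>
     \<comment> \<open>globularity\<close>
     (\<forall>k\<ge>2. \<forall>a\<in>S k.
        {gam (gam a)} = gam ` del a - \<Union> (del ` del a) \<and>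
        del (gam a) = \<Union> (del ` del a) - gam ` del a) \<and>
     \<comment> \<open>each upper order is a strict order\<close>
     (\<forall>k. \<forall>a\<in>S k. \<not> upper_lt S gam del k a a) \<and>
     \<comment> \<open>upper order linear on S 0\<close>
     (\<forall>a\<in>S 0. \<forall>b\<in>S 0. a \<noteq> b \<longrightarrow> upper_lt S gam del 0 a b \<or> upper_lt S gam del 0 b a) \<and>
     \<comment> \<open>lower and upper comparability disjoint in positive dimension\<close>
     (\<forall>k>0. \<forall>a\<in>S k. \<forall>b\<in>S k.
        \<not> ((lower_lt S gam del k a b \<or> lower_lt S gam del k b a) \<and>
           (upper_lt S gam del k a b \<or> upper_lt S gam del k b a))) \<and>
     \<comment> \<open>fibres of gam and del linearly ordered by the upper order\<close>
     (\<forall>k. \<forall>x\<in>S k. \<forall>a\<in>S (Suc k). \<forall>b\<in>S (Suc k).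
        gam a = x \<longrightarrow> gam b = x \<longrightarrow> a \<noteq> b \<longrightarrow>
        upper_lt S gam del (Suc k) a b \<or> upper_lt S gam del (Suc k) b a) \<and>
     (\<forall>k. \<forall>x\<in>S k. \<forall>a\<in>S (Suc k). \<forall>b\<in>S (Suc k).
        x \<in> del a \<longrightarrow> x \<in> del b \<longrightarrow> a \<noteq> b \<longrightarrow>
        upper_lt S gam del (Suc k) a b \<or> upper_lt S gam del (Suc k) b a)"

definition has_dim :: "(nat \<Rightarrow> 'a set) \<Rightarrow> nat \<Rightarrow> bool" where
  "has_dim S n \<longleftrightarrow> S n \<noteq> {} \<and> (\<forall>k>n. S k = {})"

definition positive_opetope ::
  "(nat \<Rightarrow> 'a set) \<Rightarrow> ('a \<Rightarrow> 'a) \<Rightarrow> ('a \<Rightarrow> 'a set) \<Rightarrow> nat \<Rightarrow> bool" where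
  "positive_opetope S gam del n \<longleftrightarrow>
     positive_opetopic_cardinal S gam del \<and>
     (\<forall>m. card (S m - \<Union> (del ` S (Suc m))) \<le> 1) \<and>
     has_dim S n \<and> (\<exists>t. S n = {t})"

definition top_face :: "(nat \<Rightarrow> 'a set) \<Rightarrow> nat \<Rightarrow> 'a" where
  "top_face S n = the_elem (S n)"

text \<open>Maximal flags [x_n, ..., x_0], represented as lists of length n+1
  with x ! i = x_i.\<close>
definition max_flags ::
  "(nat \<Rightarrow> 'a set) \<Rightarrow> ('a \<Rightarrow> 'a) \<Rightarrow> ('a \<Rightarrow> 'a set) \<Rightarrow> nat \<Rightarrow> 'a list set" where
  "max_flags S gam del n =
     {x. length x = Suc n \<and> x ! n = top_face S n \<and>
         (\<forall>i\<le>n. x ! i \<in> S i) \<and>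
         (\<forall>i<n. x ! i \<in> bd gam del (x ! Suc i))}"

text \<open>fsgn gam x k is the sign of the sequence [x_k, ..., x_0].\<close>
fun fsgn :: "('a \<Rightarrow> 'a) \<Rightarrow> 'a list \<Rightarrow> nat \<Rightarrow> int" where
  "fsgn gam x 0 = 1"
| "fsgn gam x (Suc k) =
     (if x ! k = gam (x ! Suc k) then fsgn gam x k else - fsgn gam x k)"

definition pencil_lt ::
  "(nat \<Rightarrow> 'a set) \<Rightarrow> ('a \<Rightarrow> 'a) \<Rightarrow> ('a \<Rightarrow> 'a set) \<Rightarrow> nat \<Rightarrow> 'a \<Rightarrow> 'a \<Rightarrow> 'a \<Rightarrow> bool" where
  "pencil_lt S gam del k x a b \<longleftrightarrow>
     a \<in> S (Suc k) \<and> b \<in> S (Suc k) \<and> x \<in> bd gam del a \<and> x \<in> bd gam del b \<and>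
     ((gam b = x \<and> x \<in> del a) \<or>
      (x \<in> del a \<and> x \<in> del b \<and> upper_lt S gam del (Suc k) a b) \<or>
      (gam a = x \<and> gam b = x \<and> upper_lt S gam del (Suc k) b a))"

definition flag_lt ::
  "(nat \<Rightarrow> 'a set) \<Rightarrow> ('a \<Rightarrow> 'a) \<Rightarrow> ('a \<Rightarrow> 'a set) \<Rightarrow> 'a list \<Rightarrow> 'a list \<Rightarrow> bool" where
  "flag_lt S gam del x y \<longleftrightarrow> x \<noteq> y \<and>
     (let k = (LEAST j. x ! j \<noteq> y ! j) in
       (k = 0 \<and> upper_lt S gam del 0 (y ! 0) (x ! 0)) \<or>
       (k > 0 \<and> fsgn gam x (k - 1) = 1 \<and> pencil_lt S gam del (k - 1) (x ! (k - 1)) (x ! k) (y ! k)) \<or>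
       (k > 0 \<and> fsgn gam x (k - 1) = -1 \<and> pencil_lt S gam del (k - 1) (x ! (k - 1)) (y ! k) (x ! k)))"

definition is_last_flag ::
  "(nat \<Rightarrow> 'a set) \<Rightarrow> ('a \<Rightarrow> 'a) \<Rightarrow> ('a \<Rightarrow> 'a set) \<Rightarrow> nat \<Rightarrow> 'a list \<Rightarrow> bool" where
  "is_last_flag S gam del n x \<longleftrightarrow>
     (\<forall>y\<in>max_flags S gam del n. y \<noteq> x \<longrightarrow> flag_lt S gam del y x)"

definition low_level :: "('a \<Rightarrow> 'a set) \<Rightarrow> nat \<Rightarrow> 'a list \<Rightarrow> nat" where
  "low_level del n x = Max {i. i < n - 1 \<and> x ! Suc i \<in> del (x ! Suc (Suc i))}"

definition is_neighbour ::
  "(nat \<Rightarrow> 'a set) \<Rightarrow> ('a \<Rightarrow> 'a) \<Rightarrow> ('a \<Rightarrow> 'a set) \<Rightarrow> nat \<Rightarrow> nat \<Rightarrow> 'a list \<Rightarrow> 'a list \<Rightarrow> bool" where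
  "is_neighbour S gam del n k x y \<longleftrightarrow>
     y \<in> max_flags S gam del n \<and> y \<noteq> x \<and> (\<forall>i\<le>n. i \<noteq> k \<longrightarrow> y ! i = x ! i)"

definition is_succ ::
  "(nat \<Rightarrow> 'a set) \<Rightarrow> ('a \<Rightarrow> 'a) \<Rightarrow> ('a \<Rightarrow> 'a set) \<Rightarrow> nat \<Rightarrow> 'a list \<Rightarrow> 'a list \<Rightarrow> bool" where
  "is_succ S gam del n x y \<longleftrightarrow>
     (if fsgn gam x n = 1 then is_neighbour S gam del n (n - 1) x y
      else is_neighbour S gam del n (low_level del n x) x y)"

definition is_immediate_successor ::
  "(nat \<Rightarrow> 'a set) \<Rightarrow> ('a \<Rightarrow> 'a) \<Rightarrow> ('a \<Rightarrow> 'a set) \<Rightarrow> nat \<Rightarrow> 'a list \<Rightarrow> 'a list \<Rightarrow> bool" where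
  "is_immediate_successor S gam del n x y \<longleftrightarrow>
     y \<in> max_flags S gam del n \<and> flag_lt S gam del x y \<and>
     \<not> (\<exists>z\<in>max_flags S gam del n. flag_lt S gam del x z \<and> flag_lt S gam del z y)"

end

theory Submission
  imports Defs
begin

locale opt =
  fixes S :: "nat \<Rightarrow> 'a set" and gam :: "'a \<Rightarrow> 'a" and del :: "'a \<Rightarrow> 'a set" and n :: nat
  assumes PO: "positive_opetope S gam del n"
begin

abbreviation "ul k a b \<equiv> upper_lt S gam del k a b"
abbreviation "lo k a b \<equiv> lower_lt S gam del k a b"
abbreviation "F \<equiv> max_flags S gam del n"
abbreviation "flt \<equiv> flag_lt S gam del"
abbreviation "pl \<equiv> pencil_lt S gam del"
abbreviation "bdd \<equiv> bd gam del"

lemma POC: "positive_opetopic_cardinal S gam del"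
  using PO unfolding positive_opetope_def by (elim conjE)

lemmas POCu = POC[unfolded positive_opetopic_cardinal_def]
lemmas HG = POCu[THEN conjunct1]
lemmas HGu = HG[unfolded positive_hypergraph_def]
lemmas GLOB = POCu[THEN conjunct2, THEN conjunct2, THEN conjunct1]
lemmas STRICT = POCu[THEN conjunct2, THEN conjunct2, THEN conjunct2, THEN conjunct1]
lemmas LIN0 = POCu[THEN conjunct2, THEN conjunct2, THEN conjunct2, THEN conjunct2, THEN conjunct1]
lemmas DISJ = POCu[THEN conjunct2, THEN conjunct2, THEN conjunct2, THEN conjunct2, THEN conjunct2, THEN conjunct1]
lemmas FIBG = POCu[THEN conjunct2, THEN conjunct2, THEN conjunct2, THEN conjunct2, THEN conjunct2, THEN conjunct2, THEN conjunct1]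
lemmas FIBD = POCu[THEN conjunct2, THEN conjunct2, THEN conjunct2, THEN conjunct2, THEN conjunct2, THEN conjunct2, THEN conjunct2]
lemmas FIN = HGu[THEN conjunct1]
lemmas SDISJ = HGu[THEN conjunct2, THEN conjunct1]
lemmas GAMS = HGu[THEN conjunct2, THEN conjunct2, THEN conjunct2, THEN conjunct1]
lemmas DELS = HGu[THEN conjunct2, THEN conjunct2, THEN conjunct2, THEN conjunct2, THEN conjunct1]
lemmas DEL1 = HGu[THEN conjunct2, THEN conjunct2, THEN conjunct2, THEN conjunct2, THEN conjunct2]

lemma gam_S: "a \<in> S (Suc k) \<Longrightarrow> gam a \<in> S k"
  using GAMS by blast

lemma del_S: "a \<in> S (Suc k) \<Longrightarrow> del a \<subseteq> S k"
  using DELS by blast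

lemma del_S': "a \<in> S (Suc k) \<Longrightarrow> b \<in> del a \<Longrightarrow> b \<in> S k"
  using del_S by blast

lemma del_ne: "a \<in> S (Suc k) \<Longrightarrow> del a \<noteq> {}"
  using DELS by blast

lemma del1: "a \<in> S (Suc 0) \<Longrightarrow> \<exists>b. del a = {b}"
  using DEL1 by simp

lemma S_disj: "k \<noteq> l \<Longrightarrow> a \<in> S k \<Longrightarrow> a \<in> S l \<Longrightarrow> False"
  using SDISJ by blast

lemma S_fin: "finite (S k)"
  using FIN by blast

lemma glob: "a \<in> S (Suc (Suc k)) \<Longrightarrow> {gam (gam a)} = gam ` del a - \<Union> (del ` del a) \<and>
   del (gam a) = \<Union> (del ` del a) - gam ` del a"
proof -
  assume a: "a \<in> S (Suc (Suc k))"
  have "Suc (Suc k) \<ge> 2" by simp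
  then show ?thesis using GLOB a by blast
qed

lemma glob1: "a \<in> S (Suc (Suc k)) \<Longrightarrow> {gam (gam a)} = gam ` del a - \<Union> (del ` del a)"
  using glob by blast

lemma glob2: "a \<in> S (Suc (Suc k)) \<Longrightarrow> del (gam a) = \<Union> (del ` del a) - gam ` del a"
  using glob by blast

lemma ul_mem: "ul k a b \<Longrightarrow> a \<in> S k \<and> b \<in> S k"
  unfolding upper_lt_def
  by (induction rule: trancl_induct) (auto simp: upper_rel_def)

lemma ul_irrefl: "\<not> ul k a a"
  using STRICT ul_mem by blast

lemma ul_trans: "ul k a b \<Longrightarrow> ul k b c \<Longrightarrow> ul k a c"
  unfolding upper_lt_def by (rule trancl_trans)

lemma ul_asym: "ul k a b \<Longrightarrow> ul k b a \<Longrightarrow> False"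
  using ul_trans ul_irrefl by blast

lemma ul_base: "\<alpha> \<in> S (Suc k) \<Longrightarrow> a \<in> del \<alpha> \<Longrightarrow> ul k a (gam \<alpha>)"
  unfolding upper_lt_def upper_rel_def
  using gam_S del_S' by blast

lemma gam_notin_del: "\<alpha> \<in> S (Suc k) \<Longrightarrow> gam \<alpha> \<in> del \<alpha> \<Longrightarrow> False"
  using ul_base ul_irrefl by metis

lemma S0_lin: "a \<in> S 0 \<Longrightarrow> b \<in> S 0 \<Longrightarrow> a \<noteq> b \<Longrightarrow> ul 0 a b \<or> ul 0 b a"
  using LIN0 by blast

lemma disj: "0 < k \<Longrightarrow> a \<in> S k \<Longrightarrow> b \<in> S k \<Longrightarrow> lo k a b \<Longrightarrow> ul k a b \<or> ul k b a \<Longrightarrow> False"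
  using DISJ by blast

lemma fibg: "x \<in> S k \<Longrightarrow> a \<in> S (Suc k) \<Longrightarrow> b \<in> S (Suc k) \<Longrightarrow> gam a = x \<Longrightarrow> gam b = x
   \<Longrightarrow> a \<noteq> b \<Longrightarrow> ul (Suc k) a b \<or> ul (Suc k) b a"
  using FIBG by blast

lemma fibd: "x \<in> S k \<Longrightarrow> a \<in> S (Suc k) \<Longrightarrow> b \<in> S (Suc k) \<Longrightarrow> x \<in> del a \<Longrightarrow> x \<in> del b
   \<Longrightarrow> a \<noteq> b \<Longrightarrow> ul (Suc k) a b \<or> ul (Suc k) b a"
  using FIBD by blast

lemma top: "S n = {top_face S n}"
  using PO unfolding positive_opetope_def top_face_def by auto

lemma above: "k > n \<Longrightarrow> S k = {}"
  using PO unfolding positive_opetope_def has_dim_def by auto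

lemma lo_step: "a \<in> S k \<Longrightarrow> b \<in> S k \<Longrightarrow> gam a \<in> del b \<Longrightarrow> lo k a b"
  unfolding lower_lt_def lower_rel_def by auto

lemma lo_ul: "lo (Suc k) a b \<Longrightarrow> ul k (gam a) (gam b)"
  unfolding lower_lt_def
proof (induction rule: trancl_induct)
  case (base y)
  then show ?case unfolding lower_rel_def using ul_base by auto
next
  case (step y z)
  then show ?case unfolding lower_rel_def using ul_base ul_trans by blast
qed

lemma lo_irrefl: "\<not> lo (Suc k) a a"
  using lo_ul ul_irrefl by blast


lemma ul_chain:
  assumes "ul K a c"
  shows "\<exists>b1\<in>S (Suc K). a \<in> del b1 \<and> (\<exists>b'\<in>S (Suc K). gam b' = c \<and> (b1, b') \<in> (lower_rel S gam del (Suc K))\<^sup>*)"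
  using assms unfolding upper_lt_def
proof (induction rule: trancl_induct)
  case (base y)
  then show ?case unfolding upper_rel_def by blast
next
  case (step y z)
  from step.IH obtain b1 b' where b1: "b1 \<in> S (Suc K)" "a \<in> del b1"
    and b': "b' \<in> S (Suc K)" "gam b' = y" "(b1, b') \<in> (lower_rel S gam del (Suc K))\<^sup>*" by blast
  from step.hyps(2) obtain \<beta> where \<beta>: "\<beta> \<in> S (Suc K)" "y \<in> del \<beta>" "gam \<beta> = z"
    unfolding upper_rel_def by blast
  have "(b', \<beta>) \<in> lower_rel S gam del (Suc K)" unfolding lower_rel_def using b' \<beta> by auto
  then have "(b1, \<beta>) \<in> (lower_rel S gam del (Suc K))\<^sup>*" by (rule rtrancl_into_rtrancl[OF b'(3)])
  then show ?case using b1 \<beta> by blast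
qed

lemma key:
  assumes al: "\<alpha> \<in> S (Suc (Suc k))" and a: "a \<in> del \<alpha>" and a': "a' \<in> del \<alpha>" and u: "ul (Suc k) a a'"
  shows False
proof -
  obtain b1 b' where b1: "b1 \<in> S (Suc (Suc k))" "a \<in> del b1"
    and b': "b' \<in> S (Suc (Suc k))" "gam b' = a'" "(b1, b') \<in> (lower_rel S gam del (Suc (Suc k)))\<^sup>*"
    using ul_chain[OF u] by blast
  have "(b', \<alpha>) \<in> lower_rel S gam del (Suc (Suc k))" unfolding lower_rel_def using b' al a' by auto
  then have "(b1, \<alpha>) \<in> (lower_rel S gam del (Suc (Suc k)))\<^sup>+" by (rule rtrancl_into_trancl1[OF b'(3)])
  then have lo: "lo (Suc (Suc k)) b1 \<alpha>" unfolding lower_lt_def .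
  show False
  proof (cases "b1 = \<alpha>")
    case True then show False using lo lo_irrefl by simp
  next
    case False
    have aS: "a \<in> S (Suc k)" using del_S' al a by blast
    have "ul (Suc (Suc k)) b1 \<alpha> \<or> ul (Suc (Suc k)) \<alpha> b1" using fibd[OF aS b1(1) al b1(2) a False] .
    then show False using disj[of "Suc (Suc k)" b1 \<alpha>] b1(1) al lo by simp
  qed
qed

lemma U1:
  assumes al: "\<alpha> \<in> S (Suc (Suc k))" and a: "a \<in> del \<alpha>" and a': "a' \<in> del \<alpha>" and g: "gam a = gam a'"
  shows "a = a'"
proof (rule ccontr)
  assume ne: "a \<noteq> a'"
  have aS: "a \<in> S (Suc k)" "a' \<in> S (Suc k)" using del_S' al a a' by blast+
  have gS: "gam a \<in> S k" using gam_S aS(1) .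
  have "ul (Suc k) a a' \<or> ul (Suc k) a' a" using fibg[OF gS aS(1) aS(2) refl g[symmetric] ne] .
  then show False using key al a a' by blast
qed

lemma U2:
  assumes al: "\<alpha> \<in> S (Suc (Suc k))" and a: "a \<in> del \<alpha>" and a': "a' \<in> del \<alpha>" and z: "z \<in> del a" "z \<in> del a'"
  shows "a = a'"
proof (rule ccontr)
  assume ne: "a \<noteq> a'"
  have aS: "a \<in> S (Suc k)" "a' \<in> S (Suc k)" using del_S' al a a' by blast+
  have zS: "z \<in> S k" using del_S' aS(1) z(1) by blast
  have "ul (Suc k) a a' \<or> ul (Suc k) a' a" using fibd[OF zS aS(1) aS(2) z ne] .
  then show False using key al a a' by blast
qed

definition cdv :: "'a \<Rightarrow> 'a \<Rightarrow> 'a \<Rightarrow> int" where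
  "cdv \<alpha> f u = (if f = gam u then 1 else -1) * (if u = gam \<alpha> then 1 else -1)"

lemma diamond:
  assumes al: "\<alpha> \<in> S (Suc (Suc K))" and u: "u \<in> bdd \<alpha>" and f: "f \<in> bdd u"
  shows "\<exists>p q. {b. b \<in> bdd \<alpha> \<and> f \<in> bdd b} = {p, q} \<and> p \<noteq> q \<and> pl K f p q \<and> cdv \<alpha> f p = 1 \<and> cdv \<alpha> f q = -1"
proof -
  have gS: "gam \<alpha> \<in> S (Suc K)" using gam_S al .
  have dS: "\<And>b. b \<in> del \<alpha> \<Longrightarrow> b \<in> S (Suc K)" using del_S' al by blast
  have G1: "{gam (gam \<alpha>)} = gam ` del \<alpha> - \<Union> (del ` del \<alpha>)" using glob1 al .
  have G2: "del (gam \<alpha>) = \<Union> (del ` del \<alpha>) - gam ` del \<alpha>" using glob2 al .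
  have nd: "gam \<alpha> \<notin> del \<alpha>" using gam_notin_del al by blast
  have ndb: "\<And>b. b \<in> del \<alpha> \<Longrightarrow> gam b \<notin> del b" using gam_notin_del dS by blast
  have ndg: "gam (gam \<alpha>) \<notin> del (gam \<alpha>)" using gam_notin_del gS by blast
  have G1a: "gam (gam \<alpha>) \<in> gam ` del \<alpha>" "gam (gam \<alpha>) \<notin> \<Union> (del ` del \<alpha>)"
    using G1 by (metis Diff_iff insertI1)+
  have G1b: "\<And>z. z \<in> gam ` del \<alpha> \<Longrightarrow> z \<notin> \<Union> (del ` del \<alpha>) \<Longrightarrow> z = gam (gam \<alpha>)"
    using G1 by (metis Diff_iff singletonD)
  have G2a: "\<And>z. z \<in> del (gam \<alpha>) \<Longrightarrow> z \<in> \<Union> (del ` del \<alpha>) \<and> z \<notin> gam ` del \<alpha>"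
    using G2 by (metis Diff_iff)
  have G2b: "\<And>z. z \<in> \<Union> (del ` del \<alpha>) \<Longrightarrow> z \<notin> gam ` del \<alpha> \<Longrightarrow> z \<in> del (gam \<alpha>)"
    using G2 by (metis Diff_iff)
  have fcase: "(\<exists>a\<in>del \<alpha>. gam a = f) \<or> (\<exists>b\<in>del \<alpha>. f \<in> del b)"
  proof -
    have "u = gam \<alpha> \<or> u \<in> del \<alpha>" using u unfolding bd_def by auto
    moreover have "f = gam u \<or> f \<in> del u" using f unfolding bd_def by auto
    ultimately consider "f = gam (gam \<alpha>)" | "f \<in> del (gam \<alpha>)" | "\<exists>a\<in>del \<alpha>. gam a = f" | "\<exists>b\<in>del \<alpha>. f \<in> del b"
      by blast
    then show ?thesis
    proof cases
      case 1 then show ?thesis using G1a(1) by (metis imageE)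
    next
      case 2 then show ?thesis using G2a by blast
    qed auto
  qed
  let ?B = "{b. b \<in> bdd \<alpha> \<and> f \<in> bdd b}"
  show ?thesis
  proof (cases "(\<exists>a\<in>del \<alpha>. gam a = f) \<and> (\<exists>b\<in>del \<alpha>. f \<in> del b)")
    case True
    then obtain a b where a: "a \<in> del \<alpha>" "gam a = f" and b: "b \<in> del \<alpha>" "f \<in> del b" by blast
    have f1: "f \<noteq> gam (gam \<alpha>)" using G1a(2) b by blast
    have f2: "f \<notin> del (gam \<alpha>)" using G2a a by blast
    have "?B = {b, a}"
    proof
      show "?B \<subseteq> {b, a}"
      proof
        fix w assume "w \<in> ?B"
        then have w: "w = gam \<alpha> \<or> w \<in> del \<alpha>" "f = gam w \<or> f \<in> del w" unfolding bd_def by auto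
        show "w \<in> {b, a}"
        proof (cases "w = gam \<alpha>")
          case True then show ?thesis using w f1 f2 by auto
        next
          case False
          then have wd: "w \<in> del \<alpha>" using w by auto
          show ?thesis
          proof (cases "f = gam w")
            case True then have "w = a" using U1[OF al wd a(1)] a by simp
            then show ?thesis by simp
          next
            case False then have "f \<in> del w" using w by auto
            then have "w = b" using U2[OF al wd b(1)] b by simp
            then show ?thesis by simp
          qed
        qed
      qed
    next
      show "{b, a} \<subseteq> ?B" using a b unfolding bd_def by auto
    qed
    moreover have "b \<noteq> a" using a b ndb by auto
    moreover have "pl K f b a" unfolding pencil_lt_def bd_def using a b dS by auto
    moreover have "cdv \<alpha> f b = 1" unfolding cdv_def using b ndb nd by (auto split: if_splits)
    moreover have "cdv \<alpha> f a = -1" unfolding cdv_def using a nd by auto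
    ultimately show ?thesis by blast
  next
    case False
    then consider (B) a where "a \<in> del \<alpha>" "gam a = f" "\<not> (\<exists>b\<in>del \<alpha>. f \<in> del b)"
      | (C) b where "b \<in> del \<alpha>" "f \<in> del b" "\<not> (\<exists>a\<in>del \<alpha>. gam a = f)"
      using fcase by blast
    then show ?thesis
    proof cases
      case (B a)
      have f1: "f = gam (gam \<alpha>)" using G1b B by blast
      have "?B = {gam \<alpha>, a}"
      proof
        show "?B \<subseteq> {gam \<alpha>, a}"
        proof
          fix w assume "w \<in> ?B"
          then have w: "w = gam \<alpha> \<or> w \<in> del \<alpha>" "f = gam w \<or> f \<in> del w" unfolding bd_def by auto
          show "w \<in> {gam \<alpha>, a}"
          proof (cases "w = gam \<alpha>")
            case True then show ?thesis by simp
          next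
            case False
            then have wd: "w \<in> del \<alpha>" using w by auto
            then have "f = gam w" using w B(3) by blast
            then have "w = a" using U1[OF al wd B(1)] B by simp
            then show ?thesis by simp
          qed
        qed
      next
        show "{gam \<alpha>, a} \<subseteq> ?B" using B f1 unfolding bd_def by auto
      qed
      moreover have "gam \<alpha> \<noteq> a" using B nd by auto
      moreover have "pl K f (gam \<alpha>) a" unfolding pencil_lt_def bd_def
        using B dS gS f1 ul_base[OF al B(1)] by auto
      moreover have "cdv \<alpha> f (gam \<alpha>) = 1" unfolding cdv_def using f1 by auto
      moreover have "cdv \<alpha> f a = -1" unfolding cdv_def using B nd by auto
      ultimately show ?thesis by blast
    next
      case (C b)
      have f1: "f \<in> del (gam \<alpha>)" using G2b C by blast
      have "?B = {b, gam \<alpha>}"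
      proof
        show "?B \<subseteq> {b, gam \<alpha>}"
        proof
          fix w assume "w \<in> ?B"
          then have w: "w = gam \<alpha> \<or> w \<in> del \<alpha>" "f = gam w \<or> f \<in> del w" unfolding bd_def by auto
          show "w \<in> {b, gam \<alpha>}"
          proof (cases "w = gam \<alpha>")
            case True then show ?thesis by simp
          next
            case False
            then have wd: "w \<in> del \<alpha>" using w by auto
            then have "f \<in> del w" using w C(3) by blast
            then have "w = b" using U2[OF al wd C(1)] C by simp
            then show ?thesis by simp
          qed
        qed
      next
        show "{b, gam \<alpha>} \<subseteq> ?B" using C f1 unfolding bd_def by auto
      qed
      moreover have "b \<noteq> gam \<alpha>" using C nd by auto
      moreover have "pl K f b (gam \<alpha>)" unfolding pencil_lt_def bd_def
        using C dS gS f1 ul_base[OF al C(1)] by auto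
      moreover have "cdv \<alpha> f b = 1" unfolding cdv_def using C ndb nd by (auto split: if_splits)
      moreover have "cdv \<alpha> f (gam \<alpha>) = -1" unfolding cdv_def using f1 ndg by auto
      ultimately show ?thesis by blast
    qed
  qed
qed


lemma pl_mem: "pl K p a b \<Longrightarrow> a \<in> S (Suc K) \<and> b \<in> S (Suc K)"
  unfolding pencil_lt_def by blast

lemma pl_irrefl: "\<not> pl K p a a"
proof
  assume A: "pl K p a a"
  then have aS: "a \<in> S (Suc K)" and "(gam a = p \<and> p \<in> del a) \<or> ul (Suc K) a a"
    unfolding pencil_lt_def by auto
  then show False using gam_notin_del ul_irrefl by blast
qed

lemma pl_trans: "pl K p a b \<Longrightarrow> pl K p b c \<Longrightarrow> pl K p a c"
proof -
  assume A: "pl K p a b" and B: "pl K p b c"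
  have bS: "b \<in> S (Suc K)" using pl_mem A by blast
  have nb: "\<not> (gam b = p \<and> p \<in> del b)" using gam_notin_del bS by blast
  have A': "a \<in> S (Suc K)" "p \<in> bdd a" "(gam b = p \<and> p \<in> del a) \<or> (p \<in> del a \<and> p \<in> del b \<and> ul (Suc K) a b) \<or>
      (gam a = p \<and> gam b = p \<and> ul (Suc K) b a)" using A unfolding pencil_lt_def by auto
  have B': "c \<in> S (Suc K)" "p \<in> bdd c" "(gam c = p \<and> p \<in> del b) \<or> (p \<in> del b \<and> p \<in> del c \<and> ul (Suc K) b c) \<or>
      (gam b = p \<and> gam c = p \<and> ul (Suc K) c b)" using B unfolding pencil_lt_def by auto
  have G: "(gam c = p \<and> p \<in> del a) \<or> (p \<in> del a \<and> p \<in> del c \<and> ul (Suc K) a c) \<or>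
      (gam a = p \<and> gam c = p \<and> ul (Suc K) c a)"
  proof -
    consider (i) "gam b = p" "p \<in> del a" | (ii) "p \<in> del a" "p \<in> del b" "ul (Suc K) a b"
      | (iii) "gam a = p" "gam b = p" "ul (Suc K) b a" using A'(3) by blast
    then show ?thesis
    proof cases
      case i
      then have "gam c = p" using B'(3) nb by blast
      then show ?thesis using i by blast
    next
      case ii
      then consider "gam c = p" | "p \<in> del c" "ul (Suc K) b c" using B'(3) nb by blast
      then show ?thesis
      proof cases
        case 1 then show ?thesis using ii by blast
      next
        case 2 then show ?thesis using ii ul_trans[OF ii(3) 2(2)] by blast
      qed
    next
      case iii
      then have "gam c = p" "ul (Suc K) c b" using B'(3) nb by blast+
      then show ?thesis using iii ul_trans[OF \<open>ul (Suc K) c b\<close> iii(3)] by blast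
    qed
  qed
  then show "pl K p a c" unfolding pencil_lt_def using A'(1,2) B'(1,2) by blast
qed

definition Rk :: "nat \<Rightarrow> 'a list \<Rightarrow> 'a \<Rightarrow> 'a \<Rightarrow> bool" where
  "Rk k x a b \<longleftrightarrow> (k = 0 \<and> ul 0 b a) \<or>
     (k > 0 \<and> fsgn gam x (k - 1) = 1 \<and> pl (k - 1) (x ! (k - 1)) a b) \<or>
     (k > 0 \<and> fsgn gam x (k - 1) = -1 \<and> pl (k - 1) (x ! (k - 1)) b a)"

lemma Rk_irrefl: "\<not> Rk k x a a"
  unfolding Rk_def using ul_irrefl pl_irrefl by blast

lemma fsgn_pm: "fsgn gam x i = 1 \<or> fsgn gam x i = -1"
  by (induction i) auto

lemma Rk_trans: "Rk k x a b \<Longrightarrow> Rk k x b c \<Longrightarrow> Rk k x a c"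
proof -
  assume A: "Rk k x a b" and B: "Rk k x b c"
  show "Rk k x a c"
  proof (cases "k = 0")
    case True
    then have "ul 0 b a" "ul 0 c b" using A B unfolding Rk_def by auto
    then show ?thesis using True ul_trans[OF \<open>ul 0 c b\<close> \<open>ul 0 b a\<close>] unfolding Rk_def by simp
  next
    case False
    consider "fsgn gam x (k - 1) = 1" | "fsgn gam x (k - 1) = -1" using fsgn_pm by blast
    then show ?thesis
    proof cases
      case 1
      then have "pl (k - 1) (x ! (k - 1)) a b" "pl (k - 1) (x ! (k - 1)) b c"
        using A B False unfolding Rk_def by auto
      then show ?thesis using 1 False pl_trans unfolding Rk_def by blast
    next
      case 2
      then have "pl (k - 1) (x ! (k - 1)) b a" "pl (k - 1) (x ! (k - 1)) c b"
        using A B False unfolding Rk_def by auto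
      then show ?thesis using 2 False pl_trans unfolding Rk_def by blast
    qed
  qed
qed

lemma fsgn_eq: "(\<forall>j\<le>i. x ! j = y ! j) \<Longrightarrow> fsgn gam x i = fsgn gam y i"
  by (induction i) auto

lemma Rk_cong: "(\<forall>j<k. x ! j = y ! j) \<Longrightarrow> Rk k x a b = Rk k y a b"
proof -
  assume A: "\<forall>j<k. x ! j = y ! j"
  show ?thesis
  proof (cases k)
    case 0 then show ?thesis unfolding Rk_def by simp
  next
    case (Suc K)
    have "fsgn gam x K = fsgn gam y K" using A Suc by (intro fsgn_eq) auto
    moreover have "x ! K = y ! K" using A Suc by auto
    ultimately show ?thesis unfolding Rk_def using Suc by simp
  qed
qed

lemma flt_at:
  assumes "length x = length y" "k < length x" "x ! k \<noteq> y ! k" "\<forall>j<k. x ! j = y ! j"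
  shows "flt x y \<longleftrightarrow> Rk k x (x ! k) (y ! k)"
proof -
  have L: "(LEAST j. x ! j \<noteq> y ! j) = k"
  proof (rule Least_equality)
    show "x ! k \<noteq> y ! k" using assms by simp
  next
    fix j assume "x ! j \<noteq> y ! j"
    then show "k \<le> j" using assms(4) not_le by blast
  qed
  have ne: "x \<noteq> y" using assms by auto
  show ?thesis
    by (cases k) (simp_all add: flag_lt_def Let_def L ne Rk_def)
qed

lemma diffidx:
  assumes "length x = length y" "x \<noteq> y"
  shows "\<exists>k<length x. x ! k \<noteq> y ! k \<and> (\<forall>j<k. x ! j = y ! j)"
proof -
  have ex: "\<exists>k. k < length x \<and> x ! k \<noteq> y ! k" using assms nth_equalityI by blast
  define k where "k = (LEAST k. k < length x \<and> x ! k \<noteq> y ! k)"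
  have k: "k < length x \<and> x ! k \<noteq> y ! k" unfolding k_def by (rule LeastI_ex[OF ex])
  have "\<forall>j<k. x ! j = y ! j"
  proof (intro allI impI)
    fix j assume "j < k"
    then have "\<not> (j < length x \<and> x ! j \<noteq> y ! j)" unfolding k_def by (rule not_less_Least)
    then show "x ! j = y ! j" using \<open>j < k\<close> k by auto
  qed
  then show ?thesis using k by blast
qed

lemma flt_trans:
  assumes len: "length x = length y" "length y = length z" and xy: "flt x y" and yz: "flt y z"
  shows "flt x z"
proof -
  have "x \<noteq> y" "y \<noteq> z" using xy yz unfolding flag_lt_def by auto
  obtain k1 where k1: "k1 < length x" "x ! k1 \<noteq> y ! k1" "\<forall>j<k1. x ! j = y ! j"
    using diffidx[OF len(1) \<open>x \<noteq> y\<close>] by blast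
  obtain k2 where k2: "k2 < length y" "y ! k2 \<noteq> z ! k2" "\<forall>j<k2. y ! j = z ! j"
    using diffidx[OF len(2) \<open>y \<noteq> z\<close>] by blast
  have R1: "Rk k1 x (x ! k1) (y ! k1)" using flt_at[OF len(1) k1] xy by simp
  have R2: "Rk k2 y (y ! k2) (z ! k2)" using flt_at[OF len(2) k2] yz by simp
  have lxz: "length x = length z" using len by simp
  consider "k1 < k2" | "k2 < k1" | "k1 = k2" by linarith
  then show ?thesis
  proof cases
    case 1
    have a: "\<forall>j<k1. x ! j = z ! j" using k1 k2 1 by auto
    have b: "z ! k1 = y ! k1" using k2 1 by auto
    show ?thesis using flt_at[OF lxz k1(1) _ a] k1 b R1 by simp
  next
    case 2
    have a: "\<forall>j<k2. x ! j = z ! j" using k1 k2 2 by auto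
    have b: "x ! k2 = y ! k2" using k1 2 by auto
    have c: "Rk k2 x (x ! k2) (z ! k2)" using R2 Rk_cong[of k2 x y] k1(3) 2 b by simp
    show ?thesis using flt_at[OF lxz _ _ a] k2 len b c by simp
  next
    case 3
    have c: "Rk k1 x (y ! k1) (z ! k1)" using R2 Rk_cong[of k1 x y] k1(3) 3 by simp
    have d: "Rk k1 x (x ! k1) (z ! k1)" using Rk_trans[OF R1 c] .
    have e: "x ! k1 \<noteq> z ! k1" using d Rk_irrefl by metis
    have a: "\<forall>j<k1. x ! j = z ! j" using k1 k2 3 by auto
    show ?thesis using flt_at[OF lxz k1(1) e a] d by simp
  qed
qed

lemma F_len: "x \<in> F \<Longrightarrow> length x = Suc n"
  unfolding max_flags_def by simp
lemma F_top: "x \<in> F \<Longrightarrow> x ! n = top_face S n"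
  unfolding max_flags_def by simp
lemma F_S: "x \<in> F \<Longrightarrow> i \<le> n \<Longrightarrow> x ! i \<in> S i"
  unfolding max_flags_def by simp
lemma F_bd: "x \<in> F \<Longrightarrow> i < n \<Longrightarrow> x ! i \<in> bdd (x ! Suc i)"
  unfolding max_flags_def by simp

lemma bd_S: "a \<in> S (Suc k) \<Longrightarrow> b \<in> bdd a \<Longrightarrow> b \<in> S k"
  unfolding bd_def using gam_S del_S' by blast

lemma upd_F:
  assumes x: "x \<in> F" and k: "k < n" and v: "v \<in> bdd (x ! Suc k)" and v2: "k = 0 \<or> x ! (k - 1) \<in> bdd v"
  shows "x[k := v] \<in> F"
proof -
  have len: "length x = Suc n" using F_len x .
  have vS: "v \<in> S k" using bd_S[OF F_S[OF x] v] k by simp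
  show ?thesis unfolding max_flags_def
  proof (intro CollectI conjI allI impI)
    show "length (x[k := v]) = Suc n" using len by simp
    show "x[k := v] ! n = top_face S n" using k len F_top[OF x] by simp
  next
    fix i assume "i \<le> n"
    then show "x[k := v] ! i \<in> S i" using vS F_S[OF x] len by (cases "i = k") auto
  next
    fix i assume i: "i < n"
    show "x[k := v] ! i \<in> bdd (x[k := v] ! Suc i)"
    proof (cases "i = k")
      case True then show ?thesis using v len k by simp
    next
      case False
      show ?thesis
      proof (cases "Suc i = k")
        case True then show ?thesis using v2 len i by auto
      next
        case False2: False
        then show ?thesis using False F_bd[OF x i] len i by simp
      qed
    qed
  qed
qed

lemma nb_char:
  assumes x: "x \<in> F" and k: "k < n"
  shows "is_neighbour S gam del n k x z \<longleftrightarrow>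
    (\<exists>v. v \<noteq> x ! k \<and> v \<in> bdd (x ! Suc k) \<and> (k = 0 \<or> x ! (k - 1) \<in> bdd v) \<and> z = x[k := v])"
proof
  assume N: "is_neighbour S gam del n k x z"
  then have z: "z \<in> F" "z \<noteq> x" "\<forall>i\<le>n. i \<noteq> k \<longrightarrow> z ! i = x ! i" unfolding is_neighbour_def by auto
  have len: "length x = Suc n" "length z = Suc n" using F_len x z(1) by auto
  have zf: "z = x[k := z ! k]"
  proof (rule nth_equalityI)
    show "length z = length (x[k := z ! k])" using len by simp
  next
    fix i assume "i < length z"
    then show "z ! i = x[k := z ! k] ! i" using len z(3) by (cases "i = k") auto
  qed
  have ne: "z ! k \<noteq> x ! k"
  proof
    assume "z ! k = x ! k"
    then have "z = x" using zf by simp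
    then show False using z(2) by simp
  qed
  have b1: "z ! k \<in> bdd (x ! Suc k)" using F_bd[OF z(1) k] z(3) k by simp
  have b2: "k = 0 \<or> x ! (k - 1) \<in> bdd (z ! k)"
  proof (cases k)
    case (Suc K)
    then have "z ! K \<in> bdd (z ! k)" using F_bd[OF z(1)] k by simp
    then show ?thesis using z(3) Suc k by simp
  qed simp
  show "\<exists>v. v \<noteq> x ! k \<and> v \<in> bdd (x ! Suc k) \<and> (k = 0 \<or> x ! (k - 1) \<in> bdd v) \<and> z = x[k := v]"
    using ne b1 b2 zf by blast
next
  assume "\<exists>v. v \<noteq> x ! k \<and> v \<in> bdd (x ! Suc k) \<and> (k = 0 \<or> x ! (k - 1) \<in> bdd v) \<and> z = x[k := v]"
  then obtain v where v: "v \<noteq> x ! k" "v \<in> bdd (x ! Suc k)" "k = 0 \<or> x ! (k - 1) \<in> bdd v" "z = x[k := v]" by blast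
  have len: "length x = Suc n" using F_len x by simp
  have "z \<in> F" using upd_F[OF x k v(2) v(3)] v(4) by simp
  moreover have "z \<noteq> x"
  proof -
    have "z ! k = v" using v(4) len k by simp
    then show ?thesis using v(1) by auto
  qed
  moreover have "\<forall>i\<le>n. i \<noteq> k \<longrightarrow> z ! i = x ! i" using v(4) by simp
  ultimately show "is_neighbour S gam del n k x z" unfolding is_neighbour_def by blast
qed

lemma fsgn_flip:
  assumes "\<forall>i>k. y ! i = x ! i" "fsgn gam y (Suc k) = - fsgn gam x (Suc k)" "Suc k \<le> m"
  shows "fsgn gam y m = - fsgn gam x m"
  using assms(3)
proof (induction m rule: dec_induct)
  case base then show ?case using assms(2) .
next
  case (step m)
  have "y ! m = x ! m" "y ! Suc m = x ! Suc m" using assms(1) step.hyps by auto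
  then show ?case using step.IH by simp
qed

lemma fsgn_step: "fsgn gam x (Suc (Suc K)) = fsgn gam x K * cdv (x ! Suc (Suc K)) (x ! K) (x ! Suc K)"
  unfolding cdv_def by simp

lemma nbr0:
  assumes x: "x \<in> F" and k: "k < n" and "k = 0"
  shows "\<exists>v. v \<noteq> x ! k \<and> v \<in> bdd (x ! Suc k) \<and> (k = 0 \<or> x ! (k - 1) \<in> bdd v) \<and>
     (\<forall>w. w \<noteq> x ! k \<and> w \<in> bdd (x ! Suc k) \<and> (k = 0 \<or> x ! (k - 1) \<in> bdd w) \<longrightarrow> w = v) \<and>
     fsgn gam (x[k := v]) (Suc k) = - fsgn gam x (Suc k) \<and>
     (fsgn gam x (Suc k) = 1 \<longrightarrow> Rk k x (x ! k) v)"
proof -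
  note k0 = \<open>k = 0\<close>
  have len: "length x = Suc n" using F_len x .
  have al: "x ! Suc 0 \<in> S (Suc 0)" using F_S[OF x, of "Suc 0"] k k0 by simp
  obtain s where s: "del (x ! Suc 0) = {s}" using del1[OF al] by blast
  define g where "g = gam (x ! Suc 0)"
  have bd: "bdd (x ! Suc 0) = {g, s}" unfolding bd_def g_def using s by simp
  have gs: "g \<noteq> s" using gam_notin_del[OF al] s unfolding g_def by auto
  have us: "ul 0 s g" using ul_base[OF al] s unfolding g_def by simp
  have x0: "x ! 0 = g \<or> x ! 0 = s" using F_bd[OF x, of 0] k k0 bd by simp
  have fsx: "fsgn gam x (Suc 0) = (if x ! 0 = g then 1 else -1)" by (simp add: g_def)
  have fsy: "\<And>w. fsgn gam (x[0 := w]) (Suc 0) = (if w = g then 1 else -1)" using len by (simp add: g_def)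
  have main: "\<exists>v. v \<noteq> x ! 0 \<and> v \<in> bdd (x ! Suc 0) \<and> (\<forall>w. w \<noteq> x ! 0 \<and> w \<in> bdd (x ! Suc 0) \<longrightarrow> w = v) \<and>
     fsgn gam (x[0 := v]) (Suc 0) = - fsgn gam x (Suc 0) \<and> (fsgn gam x (Suc 0) = 1 \<longrightarrow> Rk 0 x (x ! 0) v)"
  proof (cases "x ! 0 = g")
    case True
    have "s \<noteq> x ! 0" using True gs by simp
    moreover have "s \<in> bdd (x ! Suc 0)" using bd by simp
    moreover have "\<forall>w. w \<noteq> x ! 0 \<and> w \<in> bdd (x ! Suc 0) \<longrightarrow> w = s" using bd True by auto
    moreover have "fsgn gam (x[0 := s]) (Suc 0) = - fsgn gam x (Suc 0)" using fsx fsy[of s] True gs by simp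
    moreover have "Rk 0 x (x ! 0) s" using us True by (simp add: Rk_def)
    ultimately show ?thesis by blast
  next
    case False
    then have x0s: "x ! 0 = s" using x0 by simp
    have "g \<noteq> x ! 0" using x0s gs by simp
    moreover have "g \<in> bdd (x ! Suc 0)" using bd by simp
    moreover have "\<forall>w. w \<noteq> x ! 0 \<and> w \<in> bdd (x ! Suc 0) \<longrightarrow> w = g" using bd x0s by auto
    moreover have "fsgn gam (x[0 := g]) (Suc 0) = - fsgn gam x (Suc 0)" using fsx fsy[of g] False by simp
    moreover have "fsgn gam x (Suc 0) \<noteq> 1" using fsx False by simp
    ultimately show ?thesis by blast
  qed
  then show ?thesis using k0 by simp
qed

lemma nbrS:
  assumes x: "x \<in> F" and k: "k < n" and "k = Suc K"
  shows "\<exists>v. v \<noteq> x ! k \<and> v \<in> bdd (x ! Suc k) \<and> (k = 0 \<or> x ! (k - 1) \<in> bdd v) \<and>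
     (\<forall>w. w \<noteq> x ! k \<and> w \<in> bdd (x ! Suc k) \<and> (k = 0 \<or> x ! (k - 1) \<in> bdd w) \<longrightarrow> w = v) \<and>
     fsgn gam (x[k := v]) (Suc k) = - fsgn gam x (Suc k) \<and>
     (fsgn gam x (Suc k) = 1 \<longrightarrow> Rk k x (x ! k) v)"
proof -
  note Suc = \<open>k = Suc K\<close>
  have len: "length x = Suc n" using F_len x .
  have al: "x ! Suc (Suc K) \<in> S (Suc (Suc K))" using F_S[OF x] k Suc by simp
  have u: "x ! Suc K \<in> bdd (x ! Suc (Suc K))" using F_bd[OF x] k Suc by simp
  have f: "x ! K \<in> bdd (x ! Suc K)" using F_bd[OF x] k Suc by simp
  obtain p q where pq: "{b. b \<in> bdd (x ! Suc (Suc K)) \<and> x ! K \<in> bdd b} = {p, q}" "p \<noteq> q"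
     "pl K (x ! K) p q" "cdv (x ! Suc (Suc K)) (x ! K) p = 1" "cdv (x ! Suc (Suc K)) (x ! K) q = -1"
    using diamond[OF al u f] by blast
  have Bw: "\<forall>w. (w \<in> bdd (x ! Suc (Suc K)) \<and> x ! K \<in> bdd w) \<longleftrightarrow> (w = p \<or> w = q)"
    using pq(1) unfolding set_eq_iff by simp
  have xin: "x ! Suc K = p \<or> x ! Suc K = q" using Bw u f by blast
  define v where "v = (if x ! Suc K = p then q else p)"
  have vv: "v \<noteq> x ! Suc K" "v = p \<or> v = q" using xin pq(2) unfolding v_def by auto
  have vb: "v \<in> bdd (x ! Suc (Suc K))" "x ! K \<in> bdd v" using Bw vv(2) by blast+
  have uniq: "\<forall>w. w \<noteq> x ! Suc K \<and> w \<in> bdd (x ! Suc (Suc K)) \<and> x ! K \<in> bdd w \<longrightarrow> w = v"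
    using Bw xin unfolding v_def by auto
  let ?y = "x[Suc K := v]"
  have y1: "fsgn gam ?y K = fsgn gam x K" by (rule fsgn_eq) auto
  have y2: "?y ! Suc (Suc K) = x ! Suc (Suc K)" "?y ! K = x ! K" "?y ! Suc K = v" using len k Suc by auto
  have sy: "fsgn gam ?y (Suc (Suc K)) = fsgn gam x K * cdv (x ! Suc (Suc K)) (x ! K) v"
    using fsgn_step[of ?y K] y1 y2 by simp
  have sx: "fsgn gam x (Suc (Suc K)) = fsgn gam x K * cdv (x ! Suc (Suc K)) (x ! K) (x ! Suc K)"
    using fsgn_step[of x K] by simp
  have cv: "cdv (x ! Suc (Suc K)) (x ! K) v = - cdv (x ! Suc (Suc K)) (x ! K) (x ! Suc K)"
    using xin pq(4,5) unfolding v_def by auto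
  have fs: "fsgn gam ?y (Suc (Suc K)) = - fsgn gam x (Suc (Suc K))" using sy sx cv by simp
  have R: "fsgn gam x (Suc (Suc K)) = 1 \<longrightarrow> Rk (Suc K) x (x ! Suc K) v"
  proof
    assume A: "fsgn gam x (Suc (Suc K)) = 1"
    have "fsgn gam x K = 1 \<or> fsgn gam x K = -1" by (rule fsgn_pm)
    then show "Rk (Suc K) x (x ! Suc K) v"
    proof
      assume s1: "fsgn gam x K = 1"
      then have "cdv (x ! Suc (Suc K)) (x ! K) (x ! Suc K) = 1" using A sx by simp
      then have "x ! Suc K = p" using xin pq(5) by auto
      then show ?thesis unfolding Rk_def v_def using s1 pq(3) by simp
    next
      assume s1: "fsgn gam x K = -1"
      then have "cdv (x ! Suc (Suc K)) (x ! K) (x ! Suc K) = -1" using A sx by simp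
      then have "x ! Suc K = q" using xin pq(4) by auto
      then show ?thesis unfolding Rk_def v_def using s1 pq(2,3) by simp
    qed
  qed
  have main: "\<exists>v. v \<noteq> x ! Suc K \<and> v \<in> bdd (x ! Suc (Suc K)) \<and> x ! K \<in> bdd v \<and>
     (\<forall>w. w \<noteq> x ! Suc K \<and> w \<in> bdd (x ! Suc (Suc K)) \<and> x ! K \<in> bdd w \<longrightarrow> w = v) \<and>
     fsgn gam (x[Suc K := v]) (Suc (Suc K)) = - fsgn gam x (Suc (Suc K)) \<and>
     (fsgn gam x (Suc (Suc K)) = 1 \<longrightarrow> Rk (Suc K) x (x ! Suc K) v)"
    using vv(1) vb uniq fs R by blast
  then show ?thesis using Suc by simp
qed

lemma nbr_main:
  assumes x: "x \<in> F" and k: "k < n"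
  shows "\<exists>v. v \<noteq> x ! k \<and> v \<in> bdd (x ! Suc k) \<and> (k = 0 \<or> x ! (k - 1) \<in> bdd v) \<and>
     (\<forall>w. w \<noteq> x ! k \<and> w \<in> bdd (x ! Suc k) \<and> (k = 0 \<or> x ! (k - 1) \<in> bdd w) \<longrightarrow> w = v) \<and>
     fsgn gam (x[k := v]) (Suc k) = - fsgn gam x (Suc k) \<and>
     (fsgn gam x (Suc k) = 1 \<longrightarrow> Rk k x (x ! k) v)"
  using nbr0[OF x k] nbrS[OF x k] by (cases k) auto

definition nb :: "nat \<Rightarrow> 'a list \<Rightarrow> 'a list" where
  "nb k x = (THE y. is_neighbour S gam del n k x y)"

lemma nb_form:
  assumes x: "x \<in> F" and k: "k < n"
  shows "\<exists>v. nb k x = x[k := v] \<and> is_neighbour S gam del n k x (x[k := v]) \<and>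
     (\<forall>z. is_neighbour S gam del n k x z \<longrightarrow> z = x[k := v]) \<and>
     fsgn gam (x[k := v]) (Suc k) = - fsgn gam x (Suc k) \<and>
     (fsgn gam x (Suc k) = 1 \<longrightarrow> Rk k x (x ! k) v) \<and> v \<noteq> x ! k"
proof -
  obtain v where v: "v \<noteq> x ! k" "v \<in> bdd (x ! Suc k)" "k = 0 \<or> x ! (k - 1) \<in> bdd v"
     "\<forall>w. w \<noteq> x ! k \<and> w \<in> bdd (x ! Suc k) \<and> (k = 0 \<or> x ! (k - 1) \<in> bdd w) \<longrightarrow> w = v"
     "fsgn gam (x[k := v]) (Suc k) = - fsgn gam x (Suc k)"
     "fsgn gam x (Suc k) = 1 \<longrightarrow> Rk k x (x ! k) v"
    using nbr_main[OF x k] by blast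
  have N: "is_neighbour S gam del n k x (x[k := v])" using nb_char[OF x k] v(1,2,3) by blast
  have U: "\<forall>z. is_neighbour S gam del n k x z \<longrightarrow> z = x[k := v]"
  proof (intro allI impI)
    fix z assume "is_neighbour S gam del n k x z"
    then obtain w where w: "w \<noteq> x ! k" "w \<in> bdd (x ! Suc k)" "k = 0 \<or> x ! (k - 1) \<in> bdd w" "z = x[k := w]"
      using nb_char[OF x k] by blast
    then have "w = v" using v(4) by blast
    then show "z = x[k := v]" using w(4) by simp
  qed
  have E: "nb k x = x[k := v]" unfolding nb_def
  proof (rule the_equality)
    show "is_neighbour S gam del n k x (x[k := v])" by (rule N)
  next
    fix z assume "is_neighbour S gam del n k x z"
    then show "z = x[k := v]" using U by blast
  qed
  show ?thesis using E N U v(1) v(5) v(6) by (intro exI[of _ v] conjI) assumption+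
qed

lemma nb_is: "x \<in> F \<Longrightarrow> k < n \<Longrightarrow> is_neighbour S gam del n k x (nb k x)"
proof -
  assume x: "x \<in> F" and k: "k < n"
  obtain v where v: "nb k x = x[k := v]" "is_neighbour S gam del n k x (x[k := v])"
    using nb_form[OF x k] by blast
  then show ?thesis by simp
qed

lemma nb_eq: "x \<in> F \<Longrightarrow> k < n \<Longrightarrow> is_neighbour S gam del n k x z \<Longrightarrow> z = nb k x"
proof -
  assume x: "x \<in> F" and k: "k < n" and z: "is_neighbour S gam del n k x z"
  obtain v where v: "nb k x = x[k := v]" "\<forall>z. is_neighbour S gam del n k x z \<longrightarrow> z = x[k := v]"
    using nb_form[OF x k] by blast
  then show ?thesis using z by simp
qed

lemma nb_F: "x \<in> F \<Longrightarrow> k < n \<Longrightarrow> nb k x \<in> F"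
  using nb_is unfolding is_neighbour_def by blast

lemma nb_agree: "x \<in> F \<Longrightarrow> k < n \<Longrightarrow> \<forall>i\<le>n. i \<noteq> k \<longrightarrow> nb k x ! i = x ! i"
  using nb_is unfolding is_neighbour_def by blast

lemma nb_inv: "x \<in> F \<Longrightarrow> k < n \<Longrightarrow> nb k (nb k x) = x"
proof -
  assume x: "x \<in> F" and k: "k < n"
  have "is_neighbour S gam del n k (nb k x) x"
    using nb_is[OF x k] x unfolding is_neighbour_def by auto
  then show "nb k (nb k x) = x" using nb_eq[OF nb_F[OF x k] k] by simp
qed

lemma nb_sgn: "x \<in> F \<Longrightarrow> k < n \<Longrightarrow> fsgn gam (nb k x) n = - fsgn gam x n"
proof -
  assume x: "x \<in> F" and k: "k < n"
  obtain v where v: "nb k x = x[k := v]" "fsgn gam (x[k := v]) (Suc k) = - fsgn gam x (Suc k)"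
    using nb_form[OF x k] by blast
  have "\<forall>i>k. x[k := v] ! i = x ! i" by simp
  then show ?thesis using fsgn_flip[OF _ v(2)] k v(1) by simp
qed

lemma nb_flt: "x \<in> F \<Longrightarrow> k < n \<Longrightarrow> fsgn gam x (Suc k) = 1 \<Longrightarrow> flt x (nb k x)"
proof -
  assume x: "x \<in> F" and k: "k < n" and s: "fsgn gam x (Suc k) = 1"
  obtain v where v: "nb k x = x[k := v]" "Rk k x (x ! k) v" "v \<noteq> x ! k"
    using nb_form[OF x k] s by blast
  have len: "length x = Suc n" using F_len x .
  have "flt x (x[k := v]) \<longleftrightarrow> Rk k x (x ! k) (x[k := v] ! k)"
    by (rule flt_at) (use len k v(3) in auto)
  then show ?thesis using v len k by simp
qed

declare fsgn.simps(2)[simp del]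

definition Lset :: "'a list \<Rightarrow> nat set" where
  "Lset x = {i. i < n - 1 \<and> x ! Suc i \<in> del (x ! Suc (Suc i))}"

lemma Lset_fin: "finite (Lset x)"
  unfolding Lset_def by (rule finite_subset[of _ "{..<n - 1}"]) auto

lemma ll_eq: "low_level del n x = Max (Lset x)"
  unfolding low_level_def Lset_def ..

lemma Lmax: "Lset x \<noteq> {} \<Longrightarrow> Max (Lset x) \<in> Lset x"
  using Max_in Lset_fin by blast

lemma Lmax_lt: "Lset x \<noteq> {} \<Longrightarrow> Max (Lset x) < n - 1"
  using Lmax unfolding Lset_def by blast

lemma fsgn_const:
  assumes "\<And>i. a \<le> i \<Longrightarrow> i < b \<Longrightarrow> x ! i = gam (x ! Suc i)" and "a \<le> b"
  shows "fsgn gam x b = fsgn gam x a"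
  using assms(2)
proof (induction b rule: dec_induct)
  case base then show ?case by simp
next
  case (step m)
  have "x ! m = gam (x ! Suc m)" using assms(1) step.hyps by simp
  then show ?case using step.IH by (simp add: fsgn.simps)
qed

lemma sgn_ll:
  assumes x: "x \<in> F" and L: "Lset x \<noteq> {}"
  shows "fsgn gam x (Suc (Max (Lset x))) = - fsgn gam x n"
proof -
  define l where "l = Max (Lset x)"
  have lin: "l \<in> Lset x" using Lmax L unfolding l_def by blast
  then have ll: "l < n - 1" and d: "x ! Suc l \<in> del (x ! Suc (Suc l))" unfolding Lset_def by auto
  have S2: "x ! Suc (Suc l) \<in> S (Suc (Suc l))" using F_S[OF x] ll by simp
  have ne: "x ! Suc l \<noteq> gam (x ! Suc (Suc l))" using d gam_notin_del[OF S2] by auto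
  have st: "fsgn gam x (Suc (Suc l)) = - fsgn gam x (Suc l)"
    using ne by (simp add: fsgn.simps(2)[of gam x "Suc l"])
  have gm: "x ! i = gam (x ! Suc i)" if "Suc (Suc l) \<le> i" "i < n" for i
  proof -
    have "\<not> (i - 1 \<le> l)" using that by simp
    then have "i - 1 \<notin> Lset x" using Max_ge[OF Lset_fin, of "i - 1" x] unfolding l_def by blast
    moreover have "i - 1 < n - 1" using that by simp
    ultimately have "x ! Suc (i - 1) \<notin> del (x ! Suc (Suc (i - 1)))" unfolding Lset_def by simp
    moreover have "Suc (i - 1) = i" using that by simp
    ultimately have "x ! i \<notin> del (x ! Suc i)" by simp
    moreover have "x ! i \<in> bdd (x ! Suc i)" using F_bd[OF x] that by simp
    ultimately show ?thesis unfolding bd_def by simp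
  qed
  have "fsgn gam x n = fsgn gam x (Suc (Suc l))" using fsgn_const[OF gm] ll by simp
  then show ?thesis using st unfolding l_def by simp
qed

lemma Lmax_upd:
  assumes L: "Lset x \<noteq> {}" and ag: "\<forall>i\<le>n. i \<noteq> Max (Lset x) \<longrightarrow> y ! i = x ! i"
  shows "Lset y \<noteq> {} \<and> Max (Lset y) = Max (Lset x)"
proof -
  define l where "l = Max (Lset x)"
  have lin: "l \<in> Lset x" using Lmax L unfolding l_def by blast
  then have ll: "l < n - 1" unfolding Lset_def by auto
  have ly: "l \<in> Lset y" using lin ll ag unfolding Lset_def l_def by auto
  have le: "i \<le> l" if "i \<in> Lset y" for i
  proof (rule ccontr)
    assume "\<not> i \<le> l"
    then have "l < i" by simp
    moreover have "i < n - 1" using that unfolding Lset_def by auto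
    ultimately have "i \<in> Lset x" using that ag unfolding Lset_def l_def by auto
    then have "i \<le> l" using Max_ge[OF Lset_fin] unfolding l_def by blast
    then show False using \<open>l < i\<close> by simp
  qed
  have "Max (Lset y) = l" by (rule Max_eqI[OF Lset_fin]) (use le ly in auto)
  then show ?thesis using ly unfolding l_def by auto
qed

definition D :: "'a list set" where "D = {x \<in> F. fsgn gam x n = 1 \<or> Lset x \<noteq> {}}"
definition D' :: "'a list set" where "D' = {x \<in> F. fsgn gam x n = -1 \<or> Lset x \<noteq> {}}"
definition sc :: "'a list \<Rightarrow> 'a list" where
  "sc x = (if fsgn gam x n = 1 then nb (n - 1) x else nb (Max (Lset x)) x)"
definition prd :: "'a list \<Rightarrow> 'a list" where
  "prd x = (if fsgn gam x n = -1 then nb (n - 1) x else nb (Max (Lset x)) x)"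

lemma sc_props:
  assumes n: "0 < n" and xD: "x \<in> D"
  shows "sc x \<in> F \<and> flt x (sc x) \<and> sc x \<in> D' \<and> prd (sc x) = x"
proof -
  have x: "x \<in> F" using xD unfolding D_def by simp
  show ?thesis
  proof (cases "fsgn gam x n = 1")
    case True
    have k: "n - 1 < n" using n by simp
    have e: "sc x = nb (n - 1) x" unfolding sc_def using True by simp
    have sn: "Suc (n - 1) = n" using n by simp
    have s: "fsgn gam x (Suc (n - 1)) = 1" unfolding sn by (rule True)
    have ys: "fsgn gam (nb (n - 1) x) n = -1" using nb_sgn[OF x k] True by simp
    have yF: "nb (n - 1) x \<in> F" by (rule nb_F[OF x k])
    have yD: "nb (n - 1) x \<in> D'" unfolding D'_def using yF ys by simp
    have pr: "prd (nb (n - 1) x) = x" unfolding prd_def using ys nb_inv[OF x k] by simp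
    have fl: "flt x (nb (n - 1) x)" by (rule nb_flt[OF x k s])
    show ?thesis unfolding e using yF fl yD pr by blast
  next
    case False
    have m1: "fsgn gam x n = -1" using fsgn_pm[of x n] False by blast
    have L: "Lset x \<noteq> {}" using xD False unfolding D_def by simp
    define l where "l = Max (Lset x)"
    have k: "l < n" using Lmax_lt[OF L] unfolding l_def by simp
    have e: "sc x = nb l x" unfolding sc_def l_def using False by simp
    have s0: "fsgn gam x (Suc (Max (Lset x))) = - fsgn gam x n" by (rule sgn_ll[OF x L])
    have s: "fsgn gam x (Suc l) = 1" using s0 m1 unfolding l_def by simp
    have ys: "fsgn gam (nb l x) n = 1" using nb_sgn[OF x k] m1 by simp
    have ag: "\<forall>i\<le>n. i \<noteq> Max (Lset x) \<longrightarrow> nb l x ! i = x ! i" using nb_agree[OF x k] unfolding l_def .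
    have Ly0: "Lset (nb l x) \<noteq> {} \<and> Max (Lset (nb l x)) = Max (Lset x)" by (rule Lmax_upd[OF L ag])
    have Ly: "Lset (nb l x) \<noteq> {}" "Max (Lset (nb l x)) = l" using Ly0 unfolding l_def by simp_all
    have yF: "nb l x \<in> F" by (rule nb_F[OF x k])
    have yD: "nb l x \<in> D'" unfolding D'_def using yF Ly(1) by simp
    have ne: "fsgn gam (nb l x) n \<noteq> -1" using ys by simp
    have pr: "prd (nb l x) = x" unfolding prd_def using ne Ly(2) nb_inv[OF x k] by simp
    have fl: "flt x (nb l x)" by (rule nb_flt[OF x k s])
    show ?thesis unfolding e using yF fl yD pr by blast
  qed
qed

lemma prd_props:
  assumes n: "0 < n" and yD: "y \<in> D'"
  shows "prd y \<in> D \<and> sc (prd y) = y"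
proof -
  have y: "y \<in> F" using yD unfolding D'_def by simp
  show ?thesis
  proof (cases "fsgn gam y n = -1")
    case True
    have k: "n - 1 < n" using n by simp
    have e: "prd y = nb (n - 1) y" unfolding prd_def using True by simp
    have xs: "fsgn gam (nb (n - 1) y) n = 1" using nb_sgn[OF y k] True by simp
    have xF: "nb (n - 1) y \<in> F" by (rule nb_F[OF y k])
    have xD: "nb (n - 1) y \<in> D" unfolding D_def using xF xs by simp
    have sc: "sc (nb (n - 1) y) = y" unfolding sc_def using xs nb_inv[OF y k] by simp
    show ?thesis unfolding e using xD sc by blast
  next
    case False
    have m1: "fsgn gam y n = 1" using fsgn_pm[of y n] False by blast
    have L: "Lset y \<noteq> {}" using yD False unfolding D'_def by simp
    define l where "l = Max (Lset y)"
    have k: "l < n" using Lmax_lt[OF L] unfolding l_def by simp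
    have e: "prd y = nb l y" unfolding prd_def l_def using False by simp
    have xs: "fsgn gam (nb l y) n = -1" using nb_sgn[OF y k] m1 by simp
    have ag: "\<forall>i\<le>n. i \<noteq> Max (Lset y) \<longrightarrow> nb l y ! i = y ! i" using nb_agree[OF y k] unfolding l_def .
    have Lx0: "Lset (nb l y) \<noteq> {} \<and> Max (Lset (nb l y)) = Max (Lset y)" by (rule Lmax_upd[OF L ag])
    have Lx: "Lset (nb l y) \<noteq> {}" "Max (Lset (nb l y)) = l" using Lx0 unfolding l_def by simp_all
    have xF: "nb l y \<in> F" by (rule nb_F[OF y k])
    have xD: "nb l y \<in> D" unfolding D_def using xF Lx(1) by simp
    have ne: "fsgn gam (nb l y) n \<noteq> 1" using xs by simp
    have sc: "sc (nb l y) = y" unfolding sc_def using ne Lx(2) nb_inv[OF y k] by simp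
    show ?thesis unfolding e using xD sc by blast
  qed
qed

lemma chain_gam:
  assumes y: "y \<in> F" and s: "fsgn gam y n = 1" and L: "Lset y = {}" and i: "i < n"
  shows "y ! i = gam (y ! Suc i)"
proof -
  have gm: "y ! Suc j = gam (y ! Suc (Suc j))" if "j < n - 1" for j
  proof -
    have "j \<notin> Lset y" using L by simp
    then have "y ! Suc j \<notin> del (y ! Suc (Suc j))" unfolding Lset_def using that by simp
    moreover have "y ! Suc j \<in> bdd (y ! Suc (Suc j))" using F_bd[OF y] that by simp
    ultimately show ?thesis unfolding bd_def by simp
  qed
  show ?thesis
  proof (cases i)
    case (Suc j)
    then show ?thesis using gm[of j] i by simp
  next
    case 0
    have gm': "y ! i = gam (y ! Suc i)" if "Suc 0 \<le> i" "i < n" for i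
      using gm[of "i - 1"] that by (simp add: Suc_diff_1)
    have "fsgn gam y n = fsgn gam y (Suc 0)" using fsgn_const[OF gm'] i by simp
    then have "fsgn gam y (Suc 0) = 1" using s by simp
    then show ?thesis using 0 by (auto simp: fsgn.simps split: if_splits)
  qed
qed

lemma nonD'_unique:
  assumes y: "y \<in> F" "y \<notin> D'" and y': "y' \<in> F" "y' \<notin> D'"
  shows "y = y'"
proof -
  have s: "fsgn gam y n = 1" "Lset y = {}" using y fsgn_pm unfolding D'_def by blast+
  have s': "fsgn gam y' n = 1" "Lset y' = {}" using y' fsgn_pm unfolding D'_def by blast+
  have eq: "y ! (n - d) = y' ! (n - d)" if "d \<le> n" for d
    using that
  proof (induction d)
    case 0 show ?case using F_top y y' by simp
  next
    case (Suc d)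
    have i: "n - Suc d < n" using Suc.prems by simp
    have e: "Suc (n - Suc d) = n - d" using Suc.prems by simp
    show ?case using chain_gam[OF y(1) s i] chain_gam[OF y'(1) s' i] Suc e by simp
  qed
  show ?thesis
  proof (rule nth_equalityI)
    show "length y = length y'" using F_len y y' by simp
  next
    fix i assume "i < length y"
    then have "i \<le> n" using F_len y by simp
    then show "y ! i = y' ! i" using eq[of "n - i"] by simp
  qed
qed

lemma flt_irrefl: "\<not> flt x x"
  unfolding flag_lt_def by simp

lemma fltF_trans: "a \<in> F \<Longrightarrow> b \<in> F \<Longrightarrow> c \<in> F \<Longrightarrow> flt a b \<Longrightarrow> flt b c \<Longrightarrow> flt a c"
proof -
  assume "a \<in> F" "b \<in> F" "c \<in> F" "flt a b" "flt b c"
  moreover have "length a = length b" "length b = length c" using F_len \<open>a \<in> F\<close> \<open>b \<in> F\<close> \<open>c \<in> F\<close> by simp_all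
  ultimately show "flt a c" using flt_trans by blast
qed

lemma F_fin: "finite F"
proof -
  have "finite (\<Union>i\<le>n. S i)" using S_fin by simp
  then have fin: "finite {xs. set xs \<subseteq> (\<Union>i\<le>n. S i) \<and> length xs = Suc n}" by (rule finite_lists_length_eq)
  have "F \<subseteq> {xs. set xs \<subseteq> (\<Union>i\<le>n. S i) \<and> length xs = Suc n}"
  proof
    fix x assume x: "x \<in> F"
    have "set x \<subseteq> (\<Union>i\<le>n. S i)"
    proof
      fix a assume "a \<in> set x"
      then obtain i where i: "i < length x" "x ! i = a" by (auto simp: in_set_conv_nth)
      then have "i \<le> n" using F_len x by simp
      then show "a \<in> (\<Union>i\<le>n. S i)" using F_S[OF x] i by blast
    qed
    then show "x \<in> {xs. set xs \<subseteq> (\<Union>i\<le>n. S i) \<and> length xs = Suc n}" using F_len x by simp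
  qed
  then show ?thesis using fin finite_subset by blast
qed

definition RR :: "('a list \<times> 'a list) set" where "RR = {(a, b). a \<in> F \<and> b \<in> F \<and> flt a b}"

lemma wfRR: "wf RR"
proof (rule finite_acyclic_wf)
  show "finite RR" unfolding RR_def
    by (rule finite_subset[of _ "F \<times> F"]) (use F_fin in auto)
  have tr: "trans RR" unfolding RR_def trans_def using fltF_trans by blast
  have tc: "RR\<^sup>+ = RR" by (rule trancl_id[OF tr])
  show "acyclic RR" unfolding acyclic_def tc unfolding RR_def using flt_irrefl by simp
qed

definition phi :: "'a list" where "phi = (SOME y. y \<in> F \<and> y \<notin> D')"
definition sq :: "nat \<Rightarrow> 'a list" where "sq i = (sc ^^ i) phi"

lemma D_F: "x \<in> D \<Longrightarrow> x \<in> F" unfolding D_def by simp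

lemma C1:
  assumes n: "0 < n"
  shows "y \<in> F \<Longrightarrow> \<exists>i. y = sq i \<and> (\<forall>l<i. sq l \<in> D)"
proof (induction y rule: wf_induct[OF wfRR])
  case (1 y)
  show ?case
  proof (cases "y \<in> D'")
    case False
    have "phi \<in> F \<and> phi \<notin> D'" unfolding phi_def by (rule someI[of _ y]) (use 1 False in simp)
    then have "y = phi" using nonD'_unique 1 False by blast
    then show ?thesis unfolding sq_def by (intro exI[of _ 0]) simp
  next
    case True
    define p where "p = prd y"
    have pp: "p \<in> D" "sc p = y" using prd_props[OF n True] unfolding p_def by auto
    have "flt p y" using sc_props[OF n pp(1)] pp(2) by simp
    then have "(p, y) \<in> RR" unfolding RR_def using D_F[OF pp(1)] 1 by simp
    then obtain i where i: "p = sq i" "\<forall>l<i. sq l \<in> D" using 1 D_F[OF pp(1)] by blast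
    have "sq (Suc i) = y" using i(1) pp(2) unfolding sq_def by simp
    moreover have "\<forall>l<Suc i. sq l \<in> D" using i pp(1) less_Suc_eq by auto
    ultimately show ?thesis by blast
  qed
qed

lemma C2:
  assumes n: "0 < n" and s0: "sq 0 \<in> F"
  shows "(\<forall>l<j. sq l \<in> D) \<Longrightarrow> sq j \<in> F \<and> (\<forall>i<j. flt (sq i) (sq j))"
proof (induction j)
  case 0 then show ?case using s0 by simp
next
  case (Suc j)
  have IH: "sq j \<in> F" "\<forall>i<j. flt (sq i) (sq j)" using Suc by auto
  have jD: "sq j \<in> D" using Suc.prems by simp
  have e: "sq (Suc j) = sc (sq j)" unfolding sq_def by simp
  have sp: "sc (sq j) \<in> F" "flt (sq j) (sc (sq j))" using sc_props[OF n jD] by auto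
  have "\<forall>i<Suc j. flt (sq i) (sq (Suc j))"
  proof (intro allI impI)
    fix i assume "i < Suc j"
    then consider "i = j" | "i < j" by linarith
    then show "flt (sq i) (sq (Suc j))"
    proof cases
      case 1 then show ?thesis using e sp by simp
    next
      case 2
      have "sq i \<in> F" using Suc.prems 2 D_F by simp
      then show ?thesis using fltF_trans[of "sq i" "sq j" "sq (Suc j)"] IH 2 e sp by simp
    qed
  qed
  then show ?case using e sp by simp
qed

lemma main_loc:
  assumes n: "0 < n" and x: "x \<in> F" and nl: "\<not> is_last_flag S gam del n x"
  shows "x \<in> D \<and> sc x \<in> F \<and> flt x (sc x) \<and> (\<forall>z\<in>F. \<not> (flt x z \<and> flt z (sc x)))"
proof -
  obtain c where xc: "x = sq c" "\<forall>l<c. sq l \<in> D" using C1[OF n x] by blast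
  have s0: "sq 0 \<in> F" using xc x D_F by (cases c) auto
  note C2' = C2[OF n s0]
  have xD: "x \<in> D"
  proof (rule ccontr)
    assume nD: "x \<notin> D"
    have "is_last_flag S gam del n x" unfolding is_last_flag_def
    proof (intro ballI impI)
      fix y assume yF: "y \<in> F" and yx: "y \<noteq> x"
      obtain b where yb: "y = sq b" "\<forall>l<b. sq l \<in> D" using C1[OF n yF] by blast
      consider "b < c" | "b = c" | "c < b" by linarith
      then show "flt y x"
      proof cases
        case 1 then show ?thesis using C2'[OF xc(2)] yb xc by simp
      next
        case 2 then show ?thesis using yb xc yx by simp
      next
        case 3 then show ?thesis using yb(2) xc nD by auto
      qed
    qed
    then show False using nl by simp
  qed
  have sp: "sc x \<in> F" "flt x (sc x)" using sc_props[OF n xD] by auto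
  have scx: "sc x = sq (Suc c)" using xc unfolding sq_def by simp
  have pre: "\<forall>l<Suc c. sq l \<in> D" using xc xD less_Suc_eq by auto
  have nz: "\<not> (flt x z \<and> flt z (sc x))" if zF: "z \<in> F" for z
  proof
    assume A: "flt x z \<and> flt z (sc x)"
    obtain b where zb: "z = sq b" "\<forall>l<b. sq l \<in> D" using C1[OF n zF] by blast
    consider "b < c" | "b = c" | "b = Suc c" | "Suc c < b" by linarith
    then show False
    proof cases
      case 1
      have "flt z x" using C2'[OF xc(2)] zb xc 1 by simp
      then have "flt x x" using fltF_trans[OF x zF x] A by blast
      then show False using flt_irrefl by blast
    next
      case 2 then show False using A zb xc flt_irrefl by simp
    next
      case 3 then show False using A zb scx flt_irrefl by simp
    next
      case 4
      have "flt (sc x) z" using C2'[OF zb(2)] zb scx 4 by simp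
      then have "flt z z" using fltF_trans[OF zF sp(1) zF] A by blast
      then show False using flt_irrefl by blast
    qed
  qed
  show ?thesis using xD sp nz by blast
qed

lemma succ_char:
  assumes n: "0 < n" and xD: "x \<in> D"
  shows "is_succ S gam del n x y \<longleftrightarrow> y = sc x"
proof -
  have x: "x \<in> F" using D_F xD .
  show ?thesis
  proof (cases "fsgn gam x n = 1")
    case True
    have k: "n - 1 < n" using n by simp
    have a1: "is_succ S gam del n x y \<longleftrightarrow> is_neighbour S gam del n (n - 1) x y"
      unfolding is_succ_def using True by simp
    have a2: "sc x = nb (n - 1) x" unfolding sc_def using True by simp
    have a3: "is_neighbour S gam del n (n - 1) x y \<longleftrightarrow> y = nb (n - 1) x"
      using nb_eq[OF x k, of y] nb_is[OF x k] by blast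
    show ?thesis using a1 a2 a3 by simp
  next
    case False
    have L: "Lset x \<noteq> {}" using xD False unfolding D_def by simp
    have k: "Max (Lset x) < n" using Lmax_lt[OF L] by simp
    have a1: "is_succ S gam del n x y \<longleftrightarrow> is_neighbour S gam del n (Max (Lset x)) x y"
      unfolding is_succ_def ll_eq using False by simp
    have a2: "sc x = nb (Max (Lset x)) x" unfolding sc_def using False by simp
    have a3: "is_neighbour S gam del n (Max (Lset x)) x y \<longleftrightarrow> y = nb (Max (Lset x)) x"
      using nb_eq[OF x k, of y] nb_is[OF x k] by blast
    show ?thesis using a1 a2 a3 by simp
  qed
qed

lemma final:
  assumes x: "x \<in> F" and nl: "\<not> is_last_flag S gam del n x"
  shows "(\<exists>y. is_succ S gam del n x y) \<and>
         (\<forall>y. is_succ S gam del n x y \<longrightarrow> is_immediate_successor S gam del n x y)"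
proof (cases "n = 0")
  case True
  have "is_last_flag S gam del n x" unfolding is_last_flag_def
  proof (intro ballI impI)
    fix y assume y: "y \<in> F" "y \<noteq> x"
    have "y = x"
    proof (rule nth_equalityI)
      show "length y = length x" using F_len y(1) x by simp
    next
      fix i assume "i < length y"
      then have "i = 0" using F_len y(1) True by simp
      then show "y ! i = x ! i" using F_top y(1) x True by simp
    qed
    then show "flt y x" using y(2) by simp
  qed
  then show ?thesis using nl by simp
next
  case False
  then have n: "0 < n" by simp
  have M: "x \<in> D" "sc x \<in> F" "flt x (sc x)" "\<forall>z\<in>F. \<not> (flt x z \<and> flt z (sc x))"
    using main_loc[OF n x nl] by auto
  have E: "is_succ S gam del n x y \<longleftrightarrow> y = sc x" for y using succ_char[OF n M(1)] .
  have I: "is_immediate_successor S gam del n x (sc x)" unfolding is_immediate_successor_def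
    using M(2,3,4) by blast
  show ?thesis
  proof
    show "\<exists>y. is_succ S gam del n x y" using E[of "sc x"] by blast
  next
    show "\<forall>y. is_succ S gam del n x y \<longrightarrow> is_immediate_successor S gam del n x y"
    proof (intro allI impI)
      fix y assume "is_succ S gam del n x y"
      then have "y = sc x" using E by simp
      then show "is_immediate_successor S gam del n x y" using I by simp
    qed
  qed
qed

end

theorem mainTheorem10:
  fixes S :: "nat \<Rightarrow> 'a set" and gam :: "'a \<Rightarrow> 'a" and del :: "'a \<Rightarrow> 'a set"
    and n :: nat and x :: "'a list"
  assumes "positive_opetope S gam del n"
    and "x \<in> max_flags S gam del n"
    and "\<not> is_last_flag S gam del n x"
  shows "(\<exists>y. is_succ S gam del n x y) \<and>
         (\<forall>y. is_succ S gam del n x y \<longrightarrow> is_immediate_successor S gam del n x y)"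
proof -
  interpret opt S gam del n by unfold_locales (rule assms(1))
  show ?thesis using final[OF assms(2,3)] .
qed

end
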